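(* Let $k$ be a positive integer with $4\mid k$. Then $S_3(k;4)\ge 4k-5$.
   Context: Let $k,r$ be positive integers with $r\mid k$. A solution to $\mathcal{E}$ is a $k$-tuple $(x_1,\dots,x_k)$ of positive integers (not necessarily distinct) with $\sum_{i=1}^{k-1}x_i=x_k$; it lies in $[1,n]$ if all $x_i\in\{1,\dots,n\}$. Given a coloring $\chi$ of $[1,n]$ with colors in $\{0,1,\dots,r-1\}$ (viewed as integers), a solution is $r$-zero-sum if $\sum_{i=1}^k\chi(x_i)\equiv 0\pmod r$. $S_3(k;r)$ denotes the least positive integer $n$ such that every coloring $\chi:[1,n]\to\{0,1,\dots,r-1\}$ admits an $r$-zero-sum solution to $\mathcal{E}$ in $[1,n]$. *)

theory Defs
  imports Main
begin

definition is_solution :: "nat \<Rightarrow> nat \<Rightarrow> (nat \<Rightarrow> nat) \<Rightarrow> bool" where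
  "is_solution k n x \<longleftrightarrow> (\<forall>i\<in>{1..k}. x i \<in> {1..n}) \<and> (\<Sum>i=1..k-1. x i) = x k"

definition zero_sum :: "nat \<Rightarrow> nat \<Rightarrow> (nat \<Rightarrow> nat) \<Rightarrow> (nat \<Rightarrow> nat) \<Rightarrow> bool" where
  "zero_sum k r chi x \<longleftrightarrow> (\<Sum>i=1..k. chi (x i)) mod r = 0"

definition zs_property :: "nat \<Rightarrow> nat \<Rightarrow> nat \<Rightarrow> bool" where
  "zs_property k r n \<longleftrightarrow>
     (\<forall>chi :: nat \<Rightarrow> nat. (\<forall>i\<in>{1..n}. chi i < r) \<longrightarrow>
        (\<exists>x. is_solution k n x \<and> zero_sum k r chi x))"

definition S3 :: "nat \<Rightarrow> nat \<Rightarrow> nat" where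
  "S3 k r = (LEAST n. 0 < n \<and> zs_property k r n)"

end

theory Submission
  imports Defs
begin

definition gam :: "int \<Rightarrow> int \<Rightarrow> int" where
  "gam K y = (if y \<le> 2*K-3 then 2 else if y \<le> 3*K-4 then (if even y then 1 else 3) else 1)"

lemma final_arith:
  fixes K s nA ne nB :: int
  assumes K: "K \<ge> 4" "4 dvd K" and ne: "0 \<le> ne" "ne \<le> nA" and nB: "0 \<le> nB"
    and W: "(K-2)*nA + ne + (2*K-3)*nB \<le> s - (K-1)" and s: "s \<le> 4*K-6"
  shows "(2*ne + nB + gam K s) mod 4 \<noteq> 0"
proof -
  have nA0: "nA \<ge> 0" using ne by simp
  have a: "(K-2)*nA \<ge> 0" using nA0 K by simp
  have nBle: "nB \<le> 1"
  proof (rule ccontr)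
    assume "\<not> nB \<le> 1" hence "nB \<ge> 2" by simp
    hence "(2*K-3)*nB \<ge> (2*K-3)*2" using K by (intro mult_left_mono) auto
    moreover have "(2*K-3)*2 = 4*K-6" by simp
    ultimately show False using W s a ne K by linarith
  qed
  show ?thesis
  proof (cases "nB = 1")
    case True
    have "(K-2)*nA + ne \<le> K-2" using W s True by simp
    hence ne0: "ne = 0"
    proof -
      assume h: "(K-2)*nA + ne \<le> K-2"
      show "ne = 0"
      proof (rule ccontr)
        assume "ne \<noteq> 0" hence "ne \<ge> 1" "nA \<ge> 1" using ne by auto
        hence "(K-2)*nA \<ge> (K-2)*1" using K by (intro mult_left_mono) auto
        hence "(K-2)*nA \<ge> K-2" by simp
        thus False using h \<open>ne \<ge> 1\<close> by linarith
      qed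
    qed
    have "s \<ge> 3*K-4" using W True a ne by simp
    moreover have "even (3*K-4)" using K by auto
    ultimately have "gam K s = 1" unfolding gam_def using K by auto
    thus ?thesis using ne0 True by simp
  next
    case False
    hence nB0: "nB = 0" using nB nBle by simp
    show ?thesis
    proof (cases "ne = 0")
      case True
      have "gam K s \<in> {1,2,3}" unfolding gam_def by auto
      thus ?thesis using True nB0 by auto
    next
      case False
      hence "ne \<ge> 1" "nA \<ge> 1" using ne by auto
      hence "(K-2)*nA \<ge> (K-2)*1" using K by (intro mult_left_mono) auto
      hence "(K-2)*nA \<ge> K-2" by simp
      hence "s \<ge> 2*K-2" using W nB0 \<open>ne \<ge> 1\<close> by simp
      hence "odd (gam K s)" unfolding gam_def by auto
      hence "odd (2*ne + nB + gam K s)" using nB0 by simp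
      thus ?thesis by (metis dvd_mod_iff even_numeral dvd_0_right)
    qed
  qed
qed


definition cc :: "nat \<Rightarrow> nat \<Rightarrow> int" where
  "cc k y = (if y \<le> k-2 then int y else gam (int k) (int y) - int y)"

definition col :: "nat \<Rightarrow> nat \<Rightarrow> nat" where
  "col k y = nat (cc k y mod 4)"

lemma col_lt: "col k y < 4"
  unfolding col_def by simp

lemma int_even_mod:
  fixes y :: int
  shows "even y \<Longrightarrow> (2 - 2*y) mod 4 = 2" and "odd y \<Longrightarrow> (2 - 2*y) mod 4 = 0"
    and "even y \<Longrightarrow> (1 - 2*y) mod 4 = 1" and "odd y \<Longrightarrow> (3 - 2*y) mod 4 = 1"
  by presburger+

lemma key:
  fixes k n :: nat and x :: "nat \<Rightarrow> nat"
  assumes kd: "4 dvd k" and kp: "0 < k" and sol: "is_solution k n x" and nle: "n \<le> 4*k-6"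
  shows "(\<Sum>i=1..k. col k (x i)) mod 4 \<noteq> 0"
proof -
  have k4: "k \<ge> 4" using kd kp by (auto dest: dvd_imp_le)
  have kev: "even k" using kd by (metis dvd_trans even_numeral)
  define K where "K = int k"
  define L where "L = {1..k-1}"
  define s where "s = x k"
  have xr: "\<And>i. i \<in> {1..k} \<Longrightarrow> 1 \<le> x i \<and> x i \<le> n" using sol unfolding is_solution_def by auto
  have hs: "(\<Sum>i\<in>L. x i) = s" using sol unfolding is_solution_def L_def s_def by auto
  have xL: "\<And>i. i \<in> L \<Longrightarrow> 1 \<le> x i" using xr unfolding L_def by auto
  have cardL: "card L = k-1" unfolding L_def by simp
  have sn: "s \<le> n" using xr[of k] kp unfolding s_def by auto
  have finL: "finite L" unfolding L_def by simp
  have sum1: "(\<Sum>i\<in>L. (int (x i) - 1)) = int s - (K - 1)"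
  proof -
    have "(\<Sum>i\<in>L. (int (x i) - 1)) = (\<Sum>i\<in>L. int (x i)) - (\<Sum>i\<in>L. 1)"
      by (simp add: sum_subtractf)
    also have "\<dots> = int s - int (card L)" using hs by (simp add: of_nat_sum[symmetric])
    finally show ?thesis using cardL k4 unfolding K_def by simp
  qed
  have nonneg: "\<And>i. i \<in> L \<Longrightarrow> 0 \<le> int (x i) - 1" using xL by (simp add: Suc_le_eq)
  have sge: "int s \<ge> K - 1" using sum1 sum_nonneg[of L "\<lambda>i. int (x i) - 1"] nonneg by simp
  have xle: "\<And>i. i \<in> L \<Longrightarrow> x i \<le> 3*k-4"
  proof -
    fix i assume i: "i \<in> L"
    have "int (x i) - 1 \<le> (\<Sum>i\<in>L. (int (x i) - 1))"
      by (rule member_le_sum[OF i]) (use nonneg finL in auto)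
    thus "x i \<le> 3*k-4" using sum1 sn nle k4 unfolding K_def by linarith
  qed
  define A where "A = (\<lambda>y::nat. k-1 \<le> y \<and> y \<le> 2*k-3)"
  define B where "B = (\<lambda>y::nat. 2*k-2 \<le> y \<and> y \<le> 3*k-4)"
  define w where "w = (\<lambda>y. (K-2)*of_bool (A y) + of_bool (A y \<and> even y) + (2*K-3)*of_bool (B y))"
  define dd where "dd = (\<lambda>y. 2*of_bool (A y \<and> even y) + (of_bool (B y)::int))"
  have wle: "\<And>y. 1 \<le> y \<Longrightarrow> y \<le> 3*k-4 \<Longrightarrow> w y \<le> int y - 1"
  proof -
    fix y assume y: "1 \<le> y" "y \<le> 3*k-4"
    have oddk1: "odd (k-1)" using kev k4 by simp
    show "w y \<le> int y - 1"
    proof (cases "A y")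
      case True
      hence nB: "\<not> B y" unfolding A_def B_def using k4 by auto
      show ?thesis
      proof (cases "even y")
        case True
        hence "y \<noteq> k-1" using oddk1 by auto
        hence "y \<ge> k" using \<open>A y\<close> unfolding A_def by auto
        thus ?thesis using \<open>A y\<close> nB True unfolding w_def K_def by simp
      next
        case False
        thus ?thesis using \<open>A y\<close> nB unfolding w_def K_def A_def using k4 by auto
      qed
    next
      case False
      thus ?thesis unfolding w_def K_def B_def using k4 y by auto
    qed
  qed
  have ddmod: "\<And>y. 1 \<le> y \<Longrightarrow> y \<le> 3*k-4 \<Longrightarrow> (cc k y - int y) mod 4 = dd y mod 4"
  proof -
    fix y assume y: "1 \<le> y" "y \<le> 3*k-4"
    show "(cc k y - int y) mod 4 = dd y mod 4"
    proof (cases "y \<le> k-2")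
      case True
      thus ?thesis using k4 y unfolding cc_def dd_def A_def B_def by auto
    next
      case False
      show ?thesis
      proof (cases "A y")
        case True
        hence nB: "\<not> B y" unfolding A_def B_def using k4 by auto
        have g: "gam (int k) (int y) = 2" using True k4 unfolding gam_def A_def by auto
        have e: "cc k y - int y = 2 - 2 * int y" using False g unfolding cc_def by simp
        show ?thesis using int_even_mod(1,2)[of "int y"] nB True unfolding e dd_def by auto
      next
        case nA: False
        hence Bt: "B y" using False y unfolding A_def B_def by auto
        have g: "gam (int k) (int y) = (if even y then 1 else 3)" using Bt nA False k4 y
          unfolding gam_def A_def B_def by auto
        have e: "cc k y - int y = gam (int k) (int y) - 2 * int y" using False unfolding cc_def by simp
        show ?thesis using int_even_mod(3,4)[of "int y"] nA Bt unfolding e g dd_def by auto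
      qed
    qed
  qed
  define nA where "nA = (\<Sum>i\<in>L. (of_bool (A (x i)) :: int))"
  define ne where "ne = (\<Sum>i\<in>L. (of_bool (A (x i) \<and> even (x i)) :: int))"
  define nB where "nB = (\<Sum>i\<in>L. (of_bool (B (x i)) :: int))"
  have Wsum: "(\<Sum>i\<in>L. w (x i)) = (K-2)*nA + ne + (2*K-3)*nB"
    unfolding w_def nA_def ne_def nB_def by (simp add: sum.distrib sum_distrib_left)
  have Wle: "(\<Sum>i\<in>L. w (x i)) \<le> int s - (K-1)"
    unfolding sum1[symmetric] by (rule sum_mono) (use wle xL xle in auto)
  have ddsum: "(\<Sum>i\<in>L. dd (x i)) = 2*ne + nB"
    unfolding dd_def ne_def nB_def by (simp add: sum.distrib sum_distrib_left)
  have ne0: "0 \<le> ne" unfolding ne_def by (rule sum_nonneg) simp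
  have nB0: "0 \<le> nB" unfolding nB_def by (rule sum_nonneg) simp
  have neA: "ne \<le> nA" unfolding ne_def nA_def by (rule sum_mono) simp
  have fin: "(2*ne + nB + gam K (int s)) mod 4 \<noteq> 0"
    by (rule final_arith) (use k4 kd ne0 neA nB0 Wsum Wle sn nle in \<open>auto simp: K_def\<close>)
  have ccs: "cc k s = gam K (int s) - int s" using sge k4 unfolding cc_def K_def by auto
  have "int (\<Sum>i=1..k. col k (x i)) = (\<Sum>i=1..k. cc k (x i) mod 4)"
    unfolding col_def by (simp add: of_nat_sum)
  hence "int (\<Sum>i=1..k. col k (x i)) mod 4 = (\<Sum>i=1..k. cc k (x i)) mod 4"
    by (simp add: mod_sum_eq)
  also have "(\<Sum>i=1..k. cc k (x i)) = (\<Sum>i\<in>L. cc k (x i)) + cc k s"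
  proof -
    have "{1..k} = insert k L" unfolding L_def using kp by auto
    moreover have "k \<notin> L" unfolding L_def by auto
    ultimately show ?thesis using finL unfolding s_def by simp
  qed
  also have "(\<Sum>i\<in>L. cc k (x i)) = (\<Sum>i\<in>L. int (x i)) + (\<Sum>i\<in>L. (cc k (x i) - int (x i)))"
    by (simp add: sum.distrib[symmetric])
  also have "(\<Sum>i\<in>L. int (x i)) = int s" using hs by (simp add: of_nat_sum[symmetric])
  finally have "int (\<Sum>i=1..k. col k (x i)) mod 4
      = ((\<Sum>i\<in>L. (cc k (x i) - int (x i))) + gam K (int s)) mod 4"
    using ccs by simp
  also have "\<dots> = ((\<Sum>i\<in>L. (cc k (x i) - int (x i)) mod 4) mod 4 + gam K (int s)) mod 4"
    by (simp add: mod_sum_eq mod_add_left_eq)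
  also have "(\<Sum>i\<in>L. (cc k (x i) - int (x i)) mod 4) = (\<Sum>i\<in>L. dd (x i) mod 4)"
    by (rule sum.cong) (use ddmod xL xle in auto)
  also have "((\<Sum>i\<in>L. dd (x i) mod 4) mod 4 + gam K (int s)) mod 4 = (2*ne + nB + gam K (int s)) mod 4"
    by (simp add: mod_sum_eq mod_add_left_eq ddsum)
  finally have "int (\<Sum>i=1..k. col k (x i)) mod 4 \<noteq> 0" using fin by simp
  thus ?thesis by (metis of_nat_0 of_nat_mod of_nat_numeral)
qed

theorem theorem6:
  fixes k :: nat
  assumes "0 < k" and "4 dvd k"
  shows "\<forall>n. 0 < n \<and> zs_property k 4 n \<longrightarrow> 4 * k - 5 \<le> n"
proof (intro allI impI)
  fix n assume h: "0 < n \<and> zs_property k 4 n"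
  show "4 * k - 5 \<le> n"
  proof (rule ccontr)
    assume "\<not> 4 * k - 5 \<le> n"
    hence nle: "n \<le> 4*k-6" by simp
    from h have "\<exists>x. is_solution k n x \<and> zero_sum k 4 (col k) x"
      unfolding zs_property_def using col_lt by blast
    then obtain x where xs: "is_solution k n x" and zs: "zero_sum k 4 (col k) x" by blast
    have "(\<Sum>i=1..k. col k (x i)) mod 4 \<noteq> 0" by (rule key[OF assms(2) assms(1) xs nle])
    thus False using zs unfolding zero_sum_def by simp
  qed
qed

end
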